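(* Let $(P,r)$ and $(\overline P,r)$ be MDPs on the same finite state and action spaces with rewards in $[0,1]$. Suppose there exist $m,\beta>1$, $\gamma\in(0,1)$ and a policy $\pi$ such that $$\|V^{\pi^\star_\gamma}_\gamma-\overline V^{\pi^\star_\gamma}_\gamma\|_\infty\le\frac{\beta}{1-\gamma}\sqrt{\frac{\|V^{\pi^\star_\gamma}_\gamma\|_{\mathrm{sp}}+1}{m}},\qquad \overline V^\pi_\gamma\ge\overline V^\star_\gamma-\frac1m\mathbf 1,\qquad \|\overline V^\pi_\gamma-V^\pi_\gamma\|_\infty\le\frac{\beta}{1-\gamma}\sqrt{\frac{\|\overline V^\pi_\gamma\|_{\mathrm{sp}}+1}{m}}.$$ Then $$\|\overline V^\star_\gamma-V^\star_\gamma\|_\infty\le\frac{2\beta^2}{(1-\gamma)^2m}+\frac{4\beta}{1-\gamma}\sqrt{\frac{\|V^\star_\gamma\|_{\mathrm{sp}}+1+\frac1m}{m}}+\frac4m$$ and $$\|\overline V^\star_\gamma-V^\star_\gamma\|_\infty\le\frac{2\beta^2}{(1-\gamma)^2m}+\frac{4\beta}{1-\gamma}\sqrt{\frac{\|\overline V^\star_\gamma\|_{\mathrm{sp}}+1+\frac1m}{m}}+\frac4m.$$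
   Context: $V^{\pi'}_\gamma$, $V^\star_\gamma$ are the discounted value of policy $\pi'$ and optimal value in the DMDP $(P,r,\gamma)$, with $\pi^\star_\gamma$ an optimal policy of it; $\overline V^{\pi'}_\gamma,\overline V^\star_\gamma$ are the analogous quantities in $(\overline P,r,\gamma)$. $V^\pi_\gamma(s)=\mathbb{E}^\pi_s[\sum_{t\ge0}\gamma^tr(S_t,A_t)]$. $\|x\|_{\mathrm{sp}}=\max_sx(s)-\min_sx(s)$. *)

theory Defs
  imports "HOL-Analysis.Analysis"
begin

definition is_kernel :: "('s::finite \<Rightarrow> 'a::finite \<Rightarrow> 's \<Rightarrow> real) \<Rightarrow> bool" where
  "is_kernel P \<longleftrightarrow> (\<forall>s a s'. 0 \<le> P s a s') \<and> (\<forall>s a. (\<Sum>s'\<in>UNIV. P s a s') = 1)"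

definition is_policy :: "('s::finite \<Rightarrow> 'a::finite \<Rightarrow> real) \<Rightarrow> bool" where
  "is_policy \<pi> \<longleftrightarrow> (\<forall>s a. 0 \<le> \<pi> s a) \<and> (\<forall>s. (\<Sum>a\<in>UNIV. \<pi> s a) = 1)"

fun state_dist :: "('s::finite \<Rightarrow> 'a::finite \<Rightarrow> 's \<Rightarrow> real) \<Rightarrow> ('s \<Rightarrow> 'a \<Rightarrow> real)
    \<Rightarrow> nat \<Rightarrow> 's \<Rightarrow> 's \<Rightarrow> real" where
  "state_dist P \<pi> 0 s s' = (if s' = s then 1 else 0)"
| "state_dist P \<pi> (Suc n) s s' =
     (\<Sum>u\<in>UNIV. state_dist P \<pi> n s u * (\<Sum>a\<in>UNIV. \<pi> u a * P u a s'))"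

definition disc_value :: "('s::finite \<Rightarrow> 'a::finite \<Rightarrow> 's \<Rightarrow> real) \<Rightarrow> ('s \<Rightarrow> 'a \<Rightarrow> real)
    \<Rightarrow> real \<Rightarrow> ('s \<Rightarrow> 'a \<Rightarrow> real) \<Rightarrow> 's \<Rightarrow> real" where
  "disc_value P r \<gamma> \<pi> s =
     (\<Sum>t. \<gamma> ^ t * (\<Sum>u\<in>UNIV. state_dist P \<pi> t s u * (\<Sum>a\<in>UNIV. \<pi> u a * r u a)))"

definition opt_value :: "('s::finite \<Rightarrow> 'a::finite \<Rightarrow> 's \<Rightarrow> real) \<Rightarrow> ('s \<Rightarrow> 'a \<Rightarrow> real)
    \<Rightarrow> real \<Rightarrow> 's \<Rightarrow> real" where
  "opt_value P r \<gamma> s = (SUP \<pi>\<in>{\<pi>. is_policy \<pi>}. disc_value P r \<gamma> \<pi> s)"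

definition is_opt_policy :: "('s::finite \<Rightarrow> 'a::finite \<Rightarrow> 's \<Rightarrow> real) \<Rightarrow> ('s \<Rightarrow> 'a \<Rightarrow> real)
    \<Rightarrow> real \<Rightarrow> ('s \<Rightarrow> 'a \<Rightarrow> real) \<Rightarrow> bool" where
  "is_opt_policy P r \<gamma> \<pi> \<longleftrightarrow> is_policy \<pi> \<and> (\<forall>s. disc_value P r \<gamma> \<pi> s = opt_value P r \<gamma> s)"

definition sup_norm :: "('s::finite \<Rightarrow> real) \<Rightarrow> real" where
  "sup_norm x = Max (range (\<lambda>s. \<bar>x s\<bar>))"

definition span_norm :: "('s::finite \<Rightarrow> real) \<Rightarrow> real" where
  "span_norm x = Max (range x) - Min (range x)"

end

theory Submission imports Defs begin

lemma sd_nonneg: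
  assumes "is_kernel P" "is_policy \<pi>"
  shows "0 \<le> state_dist P \<pi> n s u"
  using assms
  by (induction n arbitrary: u) (auto simp: is_kernel_def is_policy_def intro!: sum_nonneg mult_nonneg_nonneg)

lemma sd_sum:
  assumes "is_kernel P" "is_policy \<pi>"
  shows "(\<Sum>u\<in>UNIV. state_dist P \<pi> n s u) = 1"
proof (induction n)
  case 0 then show ?case by simp
next
  case (Suc n)
  have "(\<Sum>u\<in>UNIV. state_dist P \<pi> (Suc n) s u)
     = (\<Sum>v\<in>UNIV. state_dist P \<pi> n s v * (\<Sum>a\<in>UNIV. \<pi> v a * (\<Sum>u\<in>UNIV. P v a u)))"
  proof -
    have "(\<Sum>u\<in>UNIV. state_dist P \<pi> (Suc n) s u)
       = (\<Sum>u\<in>UNIV. \<Sum>v\<in>UNIV. \<Sum>a\<in>UNIV. state_dist P \<pi> n s v * (\<pi> v a * P v a u))"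
      by (simp only: state_dist.simps sum_distrib_left)
    also have "\<dots> = (\<Sum>v\<in>UNIV. \<Sum>u\<in>UNIV. \<Sum>a\<in>UNIV. state_dist P \<pi> n s v * (\<pi> v a * P v a u))"
      by (rule sum.swap)
    also have "\<dots> = (\<Sum>v\<in>UNIV. \<Sum>a\<in>UNIV. \<Sum>u\<in>UNIV. state_dist P \<pi> n s v * (\<pi> v a * P v a u))"
      by (rule sum.cong[OF refl], rule sum.swap)
    also have "\<dots> = (\<Sum>v\<in>UNIV. state_dist P \<pi> n s v * (\<Sum>a\<in>UNIV. \<pi> v a * (\<Sum>u\<in>UNIV. P v a u)))"
      by (simp only: sum_distrib_left)
    finally show ?thesis .
  qed
  also have "\<dots> = (\<Sum>v\<in>UNIV. state_dist P \<pi> n s v)"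
    using assms by (simp add: is_kernel_def is_policy_def)
  finally show ?case using Suc by simp
qed

lemma inner_bounds:
  assumes "is_kernel P" "is_policy \<pi>" "\<And>s a. 0 \<le> r s a \<and> r s a \<le> 1"
  shows "0 \<le> (\<Sum>u\<in>UNIV. state_dist P \<pi> t s u * (\<Sum>a\<in>UNIV. \<pi> u a * r u a))"
    and "(\<Sum>u\<in>UNIV. state_dist P \<pi> t s u * (\<Sum>a\<in>UNIV. \<pi> u a * r u a)) \<le> 1"
proof -
  have pn: "\<And>u a. 0 \<le> \<pi> u a" and ps: "\<And>u. (\<Sum>a\<in>UNIV. \<pi> u a) = 1"
    using assms(2) by (auto simp: is_policy_def)
  have i0: "\<And>u. 0 \<le> (\<Sum>a\<in>UNIV. \<pi> u a * r u a)"
    using pn assms(3) by (intro sum_nonneg) auto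
  have i1: "\<And>u. (\<Sum>a\<in>UNIV. \<pi> u a * r u a) \<le> 1"
  proof -
    fix u
    have "(\<Sum>a\<in>UNIV. \<pi> u a * r u a) \<le> (\<Sum>a\<in>UNIV. \<pi> u a)"
      using pn assms(3) by (intro sum_mono) (simp add: mult_left_le)
    then show "(\<Sum>a\<in>UNIV. \<pi> u a * r u a) \<le> 1" using ps by simp
  qed
  show "0 \<le> (\<Sum>u\<in>UNIV. state_dist P \<pi> t s u * (\<Sum>a\<in>UNIV. \<pi> u a * r u a))"
    using i0 sd_nonneg[OF assms(1,2)] by (intro sum_nonneg) simp
  have "(\<Sum>u\<in>UNIV. state_dist P \<pi> t s u * (\<Sum>a\<in>UNIV. \<pi> u a * r u a)) \<le> (\<Sum>u\<in>UNIV. state_dist P \<pi> t s u)"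
    using i1 sd_nonneg[OF assms(1,2)] by (intro sum_mono) (simp add: mult_left_le)
  then show "(\<Sum>u\<in>UNIV. state_dist P \<pi> t s u * (\<Sum>a\<in>UNIV. \<pi> u a * r u a)) \<le> 1"
    using sd_sum[OF assms(1,2)] by simp
qed

lemma disc_le:
  assumes "is_kernel P" "is_policy \<pi>" "\<And>s a. 0 \<le> r s a \<and> r s a \<le> 1" "0 < \<gamma>" "\<gamma> < 1"
  shows "disc_value P r \<gamma> \<pi> s \<le> 1 / (1 - \<gamma>)"
proof -
  let ?f = "\<lambda>t. \<gamma> ^ t * (\<Sum>u\<in>UNIV. state_dist P \<pi> t s u * (\<Sum>a\<in>UNIV. \<pi> u a * r u a))"
  have le: "\<And>t. ?f t \<le> \<gamma> ^ t"
    using inner_bounds[OF assms(1-3)] assms(4) by (simp add: mult_left_le)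
  have ge: "\<And>t. 0 \<le> ?f t"
    using inner_bounds[OF assms(1-3)] assms(4) by simp
  have g: "summable (\<lambda>t. \<gamma> ^ t)" using assms(4,5) by simp
  have "summable ?f"
    by (rule summable_comparison_test[OF _ g]) (use le ge in auto)
  then have "suminf ?f \<le> (\<Sum>t. \<gamma> ^ t)" using le g by (intro suminf_le) auto
  also have "\<dots> = 1 / (1 - \<gamma>)" using assms(4,5) by (simp add: suminf_geometric)
  finally show ?thesis by (simp add: disc_value_def)
qed

lemma le_opt:
  assumes "is_kernel P" "is_policy \<pi>" "\<And>s a. 0 \<le> r s a \<and> r s a \<le> 1" "0 < \<gamma>" "\<gamma> < 1"
  shows "disc_value P r \<gamma> \<pi> s \<le> opt_value P r \<gamma> s"
  unfolding opt_value_def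
  by (rule cSUP_upper) (use assms disc_le[OF assms(1) _ assms(3-5)] in \<open>auto intro!: bdd_aboveI2\<close>)


lemma abs_le_sup: "\<bar>x s\<bar> \<le> sup_norm x"
  unfolding sup_norm_def by (rule Max_ge) auto

lemma sup_le: "(\<And>s. \<bar>x s\<bar> \<le> B) \<Longrightarrow> sup_norm x \<le> B"
  unfolding sup_norm_def by (subst Max_le_iff) auto

lemma span_nonneg: "0 \<le> span_norm (x::'s::finite \<Rightarrow> real)"
proof -
  fix s :: 's
  have "x s \<le> Max (range x)" by (rule Max_ge) auto
  moreover have "Min (range x) \<le> x s" by (rule Min_le) auto
  ultimately show ?thesis unfolding span_norm_def by simp
qed

lemma span_mono:
  fixes x y :: "'s::finite \<Rightarrow> real"
  assumes "\<And>s. y s - d2 \<le> x s" "\<And>s. x s \<le> y s + d1"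
  shows "span_norm x \<le> span_norm y + d1 + d2"
proof -
  have ym: "\<And>s. y s \<le> Max (range y)" by (rule Max_ge) auto
  have "x s \<le> Max (range y) + d1" for s using ym[of s] assms(2)[of s] by linarith
  then have a: "Max (range x) \<le> Max (range y) + d1"
    by (subst Max_le_iff) auto
  have ymin: "\<And>s. Min (range y) \<le> y s" by (rule Min_le) auto
  have "Min (range y) - d2 \<le> x s" for s using ymin[of s] assms(1)[of s] by linarith
  then have b: "Min (range y) - d2 \<le> Min (range x)"
    by (subst Min_ge_iff) auto
  show ?thesis using a b unfolding span_norm_def by linarith
qed

lemma amgm:
  fixes c D m :: real
  assumes "0 \<le> c" "0 \<le> D" "0 < m"
  shows "c * sqrt (2 * D / m) \<le> c^2 / m + D / 2"
proof -
  have "(c * sqrt (2 * D / m))^2 = 2 * (c^2/m) * D"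
    using assms by (simp add: power_mult_distrib)
  also have "\<dots> \<le> (c^2 / m + D / 2)^2"
  proof -
    have "0 \<le> (c^2 / m - D / 2)^2" by simp
    then show ?thesis by (simp add: power2_eq_square algebra_simps)
  qed
  finally have sq: "(c * sqrt (2 * D / m))^2 \<le> (c^2 / m + D / 2)^2" .
  have nn: "0 \<le> c^2 / m + D / 2" using assms by simp
  show ?thesis by (rule power2_le_imp_le[OF sq nn])
qed


theorem lemma7:
  fixes P Pbar :: "'s::finite \<Rightarrow> 'a::finite \<Rightarrow> 's \<Rightarrow> real"
    and r :: "'s \<Rightarrow> 'a \<Rightarrow> real"
    and m \<beta> \<gamma> :: real
    and \<pi> \<pi>star :: "'s \<Rightarrow> 'a \<Rightarrow> real"
  assumes "is_kernel P" and "is_kernel Pbar"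
    and "\<And>s a. 0 \<le> r s a \<and> r s a \<le> 1"
    and "m > 1" and "\<beta> > 1" and "0 < \<gamma>" and "\<gamma> < 1"
    and "is_opt_policy P r \<gamma> \<pi>star"
    and "is_policy \<pi>"
    and "sup_norm (\<lambda>s. disc_value P r \<gamma> \<pi>star s - disc_value Pbar r \<gamma> \<pi>star s)
           \<le> \<beta> / (1 - \<gamma>) * sqrt ((span_norm (disc_value P r \<gamma> \<pi>star) + 1) / m)"
    and "\<And>s. disc_value Pbar r \<gamma> \<pi> s \<ge> opt_value Pbar r \<gamma> s - 1 / m"
    and "sup_norm (\<lambda>s. disc_value Pbar r \<gamma> \<pi> s - disc_value P r \<gamma> \<pi> s)
           \<le> \<beta> / (1 - \<gamma>) * sqrt ((span_norm (disc_value Pbar r \<gamma> \<pi>) + 1) / m)"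
  shows "(sup_norm (\<lambda>s. opt_value Pbar r \<gamma> s - opt_value P r \<gamma> s)
           \<le> 2 * \<beta>^2 / ((1 - \<gamma>)^2 * m)
             + 4 * \<beta> / (1 - \<gamma>) * sqrt ((span_norm (opt_value P r \<gamma>) + 1 + 1 / m) / m)
             + 4 / m)
    \<and> (sup_norm (\<lambda>s. opt_value Pbar r \<gamma> s - opt_value P r \<gamma> s)
           \<le> 2 * \<beta>^2 / ((1 - \<gamma>)^2 * m)
             + 4 * \<beta> / (1 - \<gamma>) * sqrt ((span_norm (opt_value Pbar r \<gamma>) + 1 + 1 / m) / m)
             + 4 / m)"
proof -
  define c where "c = \<beta> / (1 - \<gamma>)"
  define Vs where "Vs = opt_value P r \<gamma>"
  define Vb where "Vb = opt_value Pbar r \<gamma>"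
  define D where "D = sup_norm (\<lambda>s. Vb s - Vs s)"
  define A where "A = sup_norm (\<lambda>s. disc_value P r \<gamma> \<pi>star s - disc_value Pbar r \<gamma> \<pi>star s)"
  define B where "B = sup_norm (\<lambda>s. disc_value Pbar r \<gamma> \<pi> s - disc_value P r \<gamma> \<pi> s)"
  have c0: "0 < c" using assms(5,7) by (simp add: c_def)
  have m0: "0 < m" using assms(4) by simp
  have m1: "0 < 1 / m" using m0 by simp
  have ps: "is_policy \<pi>star" using assms(8) by (simp add: is_opt_policy_def)
  have h1: "disc_value P r \<gamma> \<pi>star = Vs" using assms(8) by (auto simp: is_opt_policy_def Vs_def)
  have h2: "\<And>s. disc_value Pbar r \<gamma> \<pi>star s \<le> Vb s"
    unfolding Vb_def by (rule le_opt[OF assms(2) ps assms(3,6,7)])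
  have h3: "\<And>s. disc_value P r \<gamma> \<pi> s \<le> Vs s"
    unfolding Vs_def by (rule le_opt[OF assms(1) assms(9) assms(3,6,7)])
  have h4: "\<And>s. disc_value Pbar r \<gamma> \<pi> s \<le> Vb s"
    unfolding Vb_def by (rule le_opt[OF assms(2) assms(9) assms(3,6,7)])
  have Ab: "A \<le> c * sqrt ((span_norm Vs + 1) / m)"
    using assms(10) h1 by (simp add: A_def c_def)
  have Bb: "B \<le> c * sqrt ((span_norm (disc_value Pbar r \<gamma> \<pi>) + 1) / m)"
    using assms(12) by (simp add: B_def c_def)
  have A1: "\<And>s. Vs s - Vb s \<le> A"
  proof -
    fix s
    have "\<bar>Vs s - disc_value Pbar r \<gamma> \<pi>star s\<bar> \<le> A"
      unfolding A_def h1[symmetric] by (rule abs_le_sup[where x="\<lambda>s. _ s - _ s", simplified])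
    then show "Vs s - Vb s \<le> A" using h2[of s] by linarith
  qed
  have B1: "\<And>s. Vb s - Vs s \<le> B + 1 / m"
  proof -
    fix s
    have "\<bar>disc_value Pbar r \<gamma> \<pi> s - disc_value P r \<gamma> \<pi> s\<bar> \<le> B"
      unfolding B_def by (rule abs_le_sup[where x="\<lambda>s. _ s - _ s", simplified])
    then show "Vb s - Vs s \<le> B + 1 / m" using h3[of s] assms(11)[of s] by (simp add: Vb_def)
  qed
  have Dle: "D \<le> max A (B + 1 / m)"
  proof -
    have "\<bar>Vb s - Vs s\<bar> \<le> max A (B + 1 / m)" for s
      using A1[of s] B1[of s] by (auto simp: abs_le_iff max_def)
    then show ?thesis unfolding D_def by (rule sup_le)
  qed
  have D0: "0 \<le> D" unfolding D_def using abs_le_sup[of "\<lambda>s. Vb s - Vs s"] by (meson abs_ge_zero order_trans)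
  have Dd: "\<And>s. \<bar>Vb s - Vs s\<bar> \<le> D" unfolding D_def by (rule abs_le_sup[where x="\<lambda>s. _ s - _ s", simplified])
  have spbpi: "span_norm (disc_value Pbar r \<gamma> \<pi>) \<le> span_norm Vb + 0 + 1 / m"
    by (rule span_mono) (use h4 assms(11) in \<open>auto simp: Vb_def\<close>)
  have Dd2: "Vb s - D \<le> Vs s" "Vs s \<le> Vb s + D" "Vs s - D \<le> Vb s" "Vb s \<le> Vs s + D" for s
    using Dd[of s] by (simp_all add: abs_le_iff)
  have spVs: "span_norm Vs \<le> span_norm Vb + D + D"
    by (rule span_mono) (rule Dd2)+
  have spVb: "span_norm Vb \<le> span_norm Vs + D + D"
    by (rule span_mono) (rule Dd2)+
  have sVs: "0 \<le> span_norm Vs" "0 \<le> span_norm Vb" by (rule span_nonneg)+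
  have am: "c * sqrt (2 * D / m) \<le> c^2 / m + D / 2" by (rule amgm) (use c0 D0 m0 in auto)
  define Y where "Y = c * sqrt ((span_norm Vs + 1 + 1 / m) / m)"
  define Z where "Z = c * sqrt ((span_norm Vb + 1 + 1 / m) / m)"
  have Y0: "0 \<le> Y" "0 \<le> Z" using c0 sVs m0 by (auto simp: Y_def Z_def)
  have sqsplit: "\<And>X. 0 \<le> X \<Longrightarrow> c * sqrt ((X + 2 * D) / m) \<le> c * sqrt (X / m) + c * sqrt (2 * D / m)"
  proof -
    fix X :: real assume "0 \<le> X"
    have "sqrt ((X + 2 * D) / m) \<le> sqrt (X / m) + sqrt (2 * D / m)"
      using sqrt_add_le_add_sqrt[of "X / m" "2 * D / m"] \<open>0 \<le> X\<close> D0 m0 by (simp add: add_divide_distrib)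
    then show "c * sqrt ((X + 2 * D) / m) \<le> c * sqrt (X / m) + c * sqrt (2 * D / m)"
      using c0 by (metis distrib_left mult_le_cancel_left_pos)
  qed
  have mono: "\<And>X X'. X \<le> X' \<Longrightarrow> c * sqrt (X / m) \<le> c * sqrt (X' / m)"
    using c0 m0 by (simp add: divide_right_mono)
  have AY: "A \<le> Y"
    using Ab mono[of "span_norm Vs + 1" "span_norm Vs + 1 + 1 / m"] m0 by (simp add: Y_def)
  have BY: "B \<le> Y + c^2 / m + D / 2"
  proof -
    have "B \<le> c * sqrt ((span_norm Vs + 1 + 1 / m + 2 * D) / m)"
      using Bb mono[of "span_norm (disc_value Pbar r \<gamma> \<pi>) + 1" "span_norm Vs + 1 + 1 / m + 2 * D"] spbpi spVb by linarith
    also have "\<dots> \<le> Y + c * sqrt (2 * D / m)"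
      using sqsplit[of "span_norm Vs + 1 + 1 / m"] sVs m0 by (simp add: Y_def)
    finally show ?thesis using am by linarith
  qed
  have BZ: "B \<le> Z"
    using Bb mono[of "span_norm (disc_value Pbar r \<gamma> \<pi>) + 1" "span_norm Vb + 1 + 1 / m"] spbpi by (simp add: Z_def)
  have AZ: "A \<le> Z + c^2 / m + D / 2"
  proof -
    have "A \<le> c * sqrt ((span_norm Vb + 1 + 1 / m + 2 * D) / m)"
      using Ab mono[of "span_norm Vs + 1" "span_norm Vb + 1 + 1 / m + 2 * D"] spVs m1
      by linarith
    also have "\<dots> \<le> Z + c * sqrt (2 * D / m)"
      using sqsplit[of "span_norm Vb + 1 + 1 / m"] sVs m0 by (simp add: Z_def)
    finally show ?thesis using am by linarith
  qed
  have cc: "2 * \<beta>^2 / ((1 - \<gamma>)^2 * m) = 2 * (c^2 / m)"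
    by (simp add: c_def power_divide)
  have c4: "4 * \<beta> / (1 - \<gamma>) = 4 * c" by (simp add: c_def)
  have q: "0 \<le> c^2 / m" using m0 by simp
  have Dc: "D \<le> A \<or> D \<le> B + 1 / m" using Dle by linarith
  have "D \<le> 2 * (c^2 / m) + 4 * Y + 4 / m"
    using Dc AY BY Y0 m1 q by linarith
  moreover have "D \<le> 2 * (c^2 / m) + 4 * Z + 4 / m"
    using Dc AZ BZ Y0 m1 q by linarith
  ultimately show ?thesis
    unfolding cc c4 by (simp add: D_def Vs_def Vb_def Y_def Z_def mult.assoc)
qed

end
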